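(* Let $n\ge 3$ and $\mathbf h\in\mathbb{R}^{\binom{n+1}{2}}$, decomposed as $\mathbf h=(\mathbf h_0,\mathbf h_1,\mathbf h_2)$. Assume $J_{n,2}\mathbf h\ge 0$ and $\mathbf h_2\not\ge 0$. Then $$P(\mathbf h_1)\ge 1,\quad R(J_{n-1,0}\mathbf h_0+\mathbf h_1)\ge 1,\quad R(J_{n-1,1}\mathbf h_1+\mathbf h_2)\ge 1.$$
   Context: For a real vector $\mathbf x$, $P(\mathbf x)$ is the number of positive components and $R(\mathbf x)$ the number of nonzero components; inequalities are componentwise, and $\mathbf x\not\ge 0$ means some component is negative. $J_{m,j}$ is the matrix, with respect to the left lexicographic bases of degree-$j$ and degree-$(j+1)$ monomials in $m$ variables, of multiplication by the sum of the variables ($J_{n,j}$ in $x_1,\dots,x_n$, $J_{n-1,j}$ in $x_2,\dots,x_n$). If $\mathbf h$ is the coordinate vector of the quadratic form $A(x)=x_1^2A_0+x_1A_1(x_2,\dots,x_n)+A_2(x_2,\dots,x_n)$ ($A_j$ homogeneous of degree $j$), then $\mathbf h_j$ is the coordinate vector of $A_j$ in the left lexicographic basis of degree-$j$ monomials in $x_2,\dots,x_n$. *)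

theory Defs
  imports Complex_Main
begin

text \<open>A coordinate vector w.r.t. the monomial basis is represented as a function from
  exponent vectors to reals; only its values on the basis monomials are its components.\<close>
definition monoms :: "nat \<Rightarrow> nat \<Rightarrow> (nat \<Rightarrow> nat) set" where
  "monoms m j = {a. (\<forall>i\<ge>m. a i = 0) \<and> (\<Sum>i<m. a i) = j}"

text \<open>J m j: multiplication of a degree-j form in m variables by the sum of the variables,
  giving the coefficient vector of the degree-(j+1) product.\<close>
definition Jmat :: "nat \<Rightarrow> nat \<Rightarrow> ((nat \<Rightarrow> nat) \<Rightarrow> real) \<Rightarrow> ((nat \<Rightarrow> nat) \<Rightarrow> real)" where
  "Jmat m j h = (\<lambda>b. \<Sum>i<m. if 0 < b i then h (b(i := b i - 1)) else 0)"

definition Pcount :: "(nat \<Rightarrow> nat) set \<Rightarrow> ((nat \<Rightarrow> nat) \<Rightarrow> real) \<Rightarrow> nat" where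
  "Pcount S v = card {a\<in>S. v a > 0}"

definition Rcount :: "(nat \<Rightarrow> nat) set \<Rightarrow> ((nat \<Rightarrow> nat) \<Rightarrow> real) \<Rightarrow> nat" where
  "Rcount S v = card {a\<in>S. v a \<noteq> 0}"

text \<open>For A(x) = x_1^2 A_0 + x_1 A_1(x_2..x_n) + A_2(x_2..x_n), hpart j h is the coefficient
  vector of A_j, a form of degree j in x_2..x_n (re-indexed as variables 0..n-2).\<close>
definition hpart :: "nat \<Rightarrow> ((nat \<Rightarrow> nat) \<Rightarrow> real) \<Rightarrow> ((nat \<Rightarrow> nat) \<Rightarrow> real)" where
  "hpart j h = (\<lambda>c. h (\<lambda>i. if i = 0 then 2 - j else c (i - 1)))"

end

theory Submission
  imports Defs
begin

lemma monoms_finite: "finite (monoms m j)"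
proof -
  have "monoms m j \<subseteq> {f. \<forall>x. (x \<in> {..<m} \<longrightarrow> f x \<in> {..j}) \<and> (x \<notin> {..<m} \<longrightarrow> f x = 0)}"
  proof
    fix a assume a: "a \<in> monoms m j"
    have "\<forall>x<m. a x \<le> j"
    proof (intro allI impI)
      fix x assume "x < m"
      then have "a x \<le> (\<Sum>i<m. a i)" by (intro member_le_sum) auto
      then show "a x \<le> j" using a by (simp add: monoms_def)
    qed
    then show "a \<in> {f. \<forall>x. (x \<in> {..<m} \<longrightarrow> f x \<in> {..j}) \<and> (x \<notin> {..<m} \<longrightarrow> f x = 0)}"
      using a by (auto simp: monoms_def)
  qed
  then show ?thesis by (rule finite_subset) (intro finite_set_of_finite_funs; simp)
qed

lemma card_ge1: "finite S \<Longrightarrow> x \<in> S \<Longrightarrow> P x \<Longrightarrow> card {a\<in>S. P a} \<ge> 1"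
proof -
  assume "finite S" "x \<in> S" "P x"
  then have "card {a\<in>S. P a} \<noteq> 0" by auto
  then show ?thesis by simp
qed

lemma mon1:
  assumes "d \<in> monoms m 1"
  shows "\<exists>k<m. d = (\<lambda>i. if i = k then 1 else 0)"
proof -
  have s: "(\<Sum>i<m. d i) = 1" and z: "\<forall>i\<ge>m. d i = 0" using assms by (auto simp: monoms_def)
  obtain k where k: "k < m" "d k > 0"
  proof (rule ccontr)
    assume "\<not> thesis"
    with that have "\<forall>i<m. d i = 0" by auto
    then have "(\<Sum>i<m. d i) = 0" by simp
    with s show False by simp
  qed
  have "(\<Sum>i<m. d i) = d k + (\<Sum>i\<in>{..<m} - {k}. d i)"
    using k by (simp add: sum.remove)
  with s k have dk: "d k = 1" by linarith
  from s k \<open>(\<Sum>i<m. d i) = d k + _\<close> dk have r: "(\<Sum>i\<in>{..<m} - {k}. d i) = 0" by linarith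
  from r have "\<forall>i\<in>{..<m} - {k}. d i = 0" by simp
  with dk z k have "d = (\<lambda>i. if i = k then 1 else 0)"
    by (intro ext) (metis DiffI lessThan_iff not_le singletonD)
  with k show ?thesis by blast
qed

lemma Jmat_single:
  assumes "k < m"
  shows "Jmat m j g (\<lambda>i. if i = k then Suc v else 0) = g (\<lambda>i. if i = k then v else 0)"
proof -
  have "Jmat m j g (\<lambda>i. if i = k then Suc v else 0)
      = (\<Sum>i<m. if i = k then g ((\<lambda>i. if i = k then Suc v else 0)(k := v)) else 0)"
    unfolding Jmat_def by (intro sum.cong) auto
  also have "\<dots> = g ((\<lambda>i. if i = k then Suc v else 0)(k := v))"
    using assms by simp
  also have "(\<lambda>i. if i = k then Suc v else (0::nat))(k := v) = (\<lambda>i. if i = k then v else 0)"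
    by auto
  finally show ?thesis .
qed

lemma single_monoms: "k < m \<Longrightarrow> (\<lambda>i. if i = k then v else 0) \<in> monoms m v"
  by (auto simp: monoms_def)

lemma eq2: "Suc 1 = (2::nat)" by simp

lemma eq3: "Suc 2 = (3::nat)" by simp

theorem lemma4p1:
  fixes n :: nat and h :: "(nat \<Rightarrow> nat) \<Rightarrow> real"
  assumes "n \<ge> 3"
    and "\<forall>b\<in>monoms n 3. Jmat n 2 h b \<ge> 0"
    and "\<exists>c\<in>monoms (n - 1) 2. hpart 2 h c < 0"
  shows "Pcount (monoms (n - 1) 1) (hpart 1 h) \<ge> 1
    \<and> Rcount (monoms (n - 1) 1) (\<lambda>c. Jmat (n - 1) 0 (hpart 0 h) c + hpart 1 h c) \<ge> 1
    \<and> Rcount (monoms (n - 1) 2) (\<lambda>c. Jmat (n - 1) 1 (hpart 1 h) c + hpart 2 h c) \<ge> 1"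
proof -
  define m where "m = n - 1"
  have nm: "n = Suc m" using assms(1) unfolding m_def by simp
  have J: "\<And>b. b \<in> monoms n 3 \<Longrightarrow> Jmat n 2 h b \<ge> 0" using assms(2) by blast
  obtain c where c: "c \<in> monoms m 2" "hpart 2 h c < 0" using assms(3) unfolding m_def by blast
  define b where "b = (\<lambda>i. if i = 0 then 1 else c (i - 1))"
  have csum: "(\<Sum>i<m. c i) = 2" and cz: "\<forall>i\<ge>m. c i = 0" using c(1) by (auto simp: monoms_def)
  have "(\<Sum>i<n. b i) = b 0 + (\<Sum>i<m. b (Suc i))" unfolding nm by (rule sum.lessThan_Suc_shift)
  also have "\<dots> = 3" using csum by (simp add: b_def)
  finally have bm: "b \<in> monoms n 3" using cz nm by (auto simp: monoms_def b_def)
  define t where "t = (\<lambda>i. if 0 < c i then hpart 1 h (c(i := c i - 1)) else 0)"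
  have "Jmat n 2 h b = (if 0 < b 0 then h (b(0 := b 0 - 1)) else 0)
      + (\<Sum>i<m. if 0 < b (Suc i) then h (b(Suc i := b (Suc i) - 1)) else 0)"
    unfolding Jmat_def nm by (rule sum.lessThan_Suc_shift)
  also have "b(0 := b 0 - 1) = (\<lambda>i. if i = 0 then 2 - 2 else c (i - 1))"
    by (auto simp: b_def)
  also have "(\<Sum>i<m. if 0 < b (Suc i) then h (b(Suc i := b (Suc i) - 1)) else 0) = sum t {..<m}"
  proof (intro sum.cong refl)
    fix i
    have "b(Suc i := b (Suc i) - 1) = (\<lambda>j. if j = 0 then 2 - 1 else (c(i := c i - 1)) (j - 1))"
      by (rule ext) (auto simp: b_def)
    moreover have "b (Suc i) = c i" by (simp add: b_def)
    ultimately show "(if 0 < b (Suc i) then h (b(Suc i := b (Suc i) - 1)) else 0) = t i"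
      unfolding t_def hpart_def by simp
  qed
  finally have "Jmat n 2 h b = hpart 2 h c + sum t {..<m}" by (simp add: b_def hpart_def)
  with J[OF bm] c(2) have "sum t {..<m} > 0" by linarith
  then obtain i where i: "i < m" "t i > 0"
    by (metis (no_types, lifting) lessThan_iff not_le sum_nonpos)
  then have ci: "0 < c i" by (auto simp: t_def split: if_splits)
  define d where "d = c(i := c i - 1)"
  have d1: "hpart 1 h d > 0" using i ci by (simp add: t_def d_def)
  have "(\<Sum>j<m. c j) = c i + (\<Sum>j\<in>{..<m} - {i}. c j)" using i by (simp add: sum.remove)
  moreover have "(\<Sum>j<m. d j) = d i + (\<Sum>j\<in>{..<m} - {i}. d j)" using i by (simp add: sum.remove)
  moreover have "(\<Sum>j\<in>{..<m} - {i}. d j) = (\<Sum>j\<in>{..<m} - {i}. c j)" by (simp add: d_def)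
  ultimately have "(\<Sum>j<m. d j) = 1" using csum ci by (simp add: d_def)
  then have dm: "d \<in> monoms m 1" using cz i by (auto simp: monoms_def d_def)
  obtain k where k: "k < m" "d = (\<lambda>j. if j = k then 1 else 0)" using mon1[OF dm] by blast
  have km: "k < m" "Suc k < n" using k nm by auto
  have "Jmat n 2 h (\<lambda>j. if j = 0 then 3 else 0) \<ge> 0"
    using J single_monoms[of 0 n 3] nm by simp
  then have h0: "h (\<lambda>j. if j = 0 then 2 else 0) \<ge> 0"
    using Jmat_single[of 0 n 2 h 2, unfolded eq3] nm by simp
  have "Jmat n 2 h (\<lambda>j. if j = Suc k then 3 else 0) \<ge> 0"
    using J single_monoms[of "Suc k" n 3] km by simp
  then have h2k: "h (\<lambda>j. if j = Suc k then 2 else 0) \<ge> 0"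
    using Jmat_single[of "Suc k" n 2 h 2, unfolded eq3] km by simp
  have e1: "hpart 1 h (\<lambda>j. if j = k then 1 else 0) > 0" using d1 k by simp
  have P: "Pcount (monoms m 1) (hpart 1 h) \<ge> 1"
    unfolding Pcount_def using card_ge1[OF monoms_finite dm, of "\<lambda>a. hpart 1 h a > 0"] d1 by simp
  have "Jmat m 0 (hpart 0 h) (\<lambda>j. if j = k then Suc 0 else 0) = hpart 0 h (\<lambda>j. if j = k then 0 else 0)"
    using Jmat_single[OF km(1)] by blast
  also have "\<dots> = h (\<lambda>j. if j = 0 then 2 else 0)"
    unfolding hpart_def by (intro arg_cong[where f = h]) auto
  finally have "Jmat m 0 (hpart 0 h) (\<lambda>j. if j = k then 1 else 0) + hpart 1 h (\<lambda>j. if j = k then 1 else 0) > 0"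
    using h0 e1 unfolding One_nat_def by simp
  then have R1: "Rcount (monoms m 1) (\<lambda>c. Jmat m 0 (hpart 0 h) c + hpart 1 h c) \<ge> 1"
    unfolding Rcount_def
    by (intro card_ge1[OF monoms_finite single_monoms[OF km(1)]]) simp
  have "Jmat m 1 (hpart 1 h) (\<lambda>j. if j = k then 2 else 0) = hpart 1 h (\<lambda>j. if j = k then 1 else 0)"
    using Jmat_single[OF km(1), where v=1, unfolded eq2] by blast
  moreover have "hpart 2 h (\<lambda>j. if j = k then 2 else 0) = h (\<lambda>j. if j = Suc k then 2 else 0)"
    unfolding hpart_def by (intro arg_cong[where f = h] ext) auto
  ultimately have "Jmat m 1 (hpart 1 h) (\<lambda>j. if j = k then 2 else 0) + hpart 2 h (\<lambda>j. if j = k then 2 else 0) > 0"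
    using h2k e1 by simp
  then have R2: "Rcount (monoms m 2) (\<lambda>c. Jmat m 1 (hpart 1 h) c + hpart 2 h c) \<ge> 1"
    unfolding Rcount_def
    by (intro card_ge1[OF monoms_finite single_monoms[OF km(1)]]) simp
  show ?thesis using P R1 R2 unfolding m_def by blast
qed

end
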